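(* For every prime power $k$, there exists a hypergraph $\widehat{\mathcal{A}_k}=(V,E)$ (obtained from the field plane $\mathcal{A}_k$ by deleting $k-1$ pairwise parallel lines) which is linear and $k$-uniform with $|V|=k^2$, $|E|=k^2+1$, having a hyperedge $e_0$ with $\mathrm{deg}(x)=k+1$ for all $x\in e_0$ and $\mathrm{deg}(x)\ge k$ for all $x\in V\smallsetminus e_0$, and such that: (i) $\mathrm{q}(\widehat{\mathcal{A}_k})=k+1$; (ii) $\widehat{\mathcal{A}_k}$ is not maximal for inclusion among linear $k$-uniform hypergraphs on the same $k^2$ vertices (some hyperedge can be added preserving linearity and $k$-uniformity); (iii) $\widehat{\mathcal{A}_k}$ has exactly one critical hyperedge, namely the unique hyperedge $e_0$ with the degree properties above.
   Context: For a prime power $k$, the field plane $\mathcal{A}_k$ is the hypergraph with vertex set $\mathbb{F}_k^2$ whose hyperedges are the $k^2+k$ affine lines of $\mathbb{F}_k^2$. A hypergraph $(V,E)$ is linear if distinct hyperedges share at most one vertex, $k$-uniform if every hyperedge has $k$ elements; $\mathrm{deg}(x)$ is the number of hyperedges containing $x$. The chromatic index $\mathrm{q}$ is the least number of colors in a coloring of hyperedges where distinct intersecting hyperedges get different colors. A hyperedge $e$ is critical if $\mathrm{q}((V,E\smallsetminus\{e\}))=\mathrm{q}((V,E))-1$. *)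

theory Defs
  imports Main "HOL-Library.Cardinality"
begin

definition hyperedge_set :: "'v set \<times> 'v set set \<Rightarrow> bool" where
  "hyperedge_set H \<longleftrightarrow> (\<forall>e\<in>snd H. e \<subseteq> fst H)"

definition linear_hg :: "'v set \<times> 'v set set \<Rightarrow> bool" where
  "linear_hg H \<longleftrightarrow> (\<forall>e1\<in>snd H. \<forall>e2\<in>snd H. e1 \<noteq> e2 \<longrightarrow> card (e1 \<inter> e2) \<le> 1)"

definition uniform_hg :: "nat \<Rightarrow> 'v set \<times> 'v set set \<Rightarrow> bool" where
  "uniform_hg k H \<longleftrightarrow> (\<forall>e\<in>snd H. finite e \<and> card e = k)"

definition deg :: "'v set \<times> 'v set set \<Rightarrow> 'v \<Rightarrow> nat" where
  "deg H x = card {e \<in> snd H. x \<in> e}"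

definition proper_edge_colouring :: "'v set \<times> 'v set set \<Rightarrow> nat \<Rightarrow> ('v set \<Rightarrow> nat) \<Rightarrow> bool" where
  "proper_edge_colouring H n c \<longleftrightarrow>
     (\<forall>e\<in>snd H. c e < n) \<and>
     (\<forall>e1\<in>snd H. \<forall>e2\<in>snd H. e1 \<noteq> e2 \<and> e1 \<inter> e2 \<noteq> {} \<longrightarrow> c e1 \<noteq> c e2)"

definition chromatic_index :: "'v set \<times> 'v set set \<Rightarrow> nat" where
  "chromatic_index H = (LEAST n. \<exists>c. proper_edge_colouring H n c)"

definition critical_edge :: "'v set \<times> 'v set set \<Rightarrow> 'v set \<Rightarrow> bool" where
  "critical_edge H e \<longleftrightarrow> e \<in> snd H \<and>
     chromatic_index (fst H, snd H - {e}) = chromatic_index H - 1"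

definition affine_line :: "'a::field \<times> 'a \<Rightarrow> 'a \<times> 'a \<Rightarrow> ('a \<times> 'a) set" where
  "affine_line p d = {(fst p + t * fst d, snd p + t * snd d) | t. True}"

definition affine_lines :: "('a::field \<times> 'a) set set" where
  "affine_lines = {affine_line p d | p d. d \<noteq> (0, 0)}"

definition parallel_lines :: "('a::field \<times> 'a) set \<Rightarrow> ('a \<times> 'a) set \<Rightarrow> bool" where
  "parallel_lines L1 L2 \<longleftrightarrow>
     (\<exists>p q d. d \<noteq> (0, 0) \<and> L1 = affine_line p d \<and> L2 = affine_line q d)"

text \<open>The field plane A_k over the finite field 'a (k = CARD('a)).\<close>
definition field_plane :: "('a::{finite,field} \<times> 'a) set \<times> ('a \<times> 'a) set set" where
  "field_plane = (UNIV, affine_lines)"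

end

theory Submission
  imports Defs
begin

definition vline :: "'a::field \<Rightarrow> ('a \<times> 'a) set" where
  "vline a = {p. fst p = a}"
definition sline :: "'a::field \<Rightarrow> 'a \<Rightarrow> ('a \<times> 'a) set" where
  "sline m b = {p. snd p = m * fst p + b}"

lemma vline_aff: "vline a = affine_line (a, 0) (0, 1)"
proof (rule set_eqI, rule iffI)
  fix x :: "'a \<times> 'a" assume "x \<in> vline a"
  then have "x = (fst (a,0::'a) + snd x * fst (0::'a,1::'a), snd (a,0::'a) + snd x * snd (0::'a,1::'a))"
    unfolding vline_def by (cases x) auto
  then show "x \<in> affine_line (a, 0) (0, 1)" unfolding affine_line_def by blast
qed (auto simp: vline_def affine_line_def)

lemma sline_aff: "sline m b = affine_line (0, b) (1, m)"
  unfolding sline_def affine_line_def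
  by (auto simp: algebra_simps)

lemma aff_cases:
  assumes "d \<noteq> (0,0)"
  shows "affine_line p d \<in> range vline \<union> range (\<lambda>(m,b). sline m b)"
proof -
  obtain p1 p2 d1 d2 where pd: "p = (p1,p2)" "d = (d1,d2)" by fastforce
  show ?thesis
  proof (cases "d1 = 0")
    case True
    then have d2: "d2 \<noteq> 0" using assms pd by auto
    have "affine_line p d = vline p1"
    proof (rule set_eqI, rule iffI)
      fix x assume "x \<in> affine_line p d"
      then show "x \<in> vline p1" using True pd unfolding affine_line_def vline_def by auto
    next
      fix x assume "x \<in> vline p1"
      then have "x = (p1 + ((snd x - p2)/d2) * d1, p2 + ((snd x - p2)/d2) * d2)"
        using True d2 unfolding vline_def by (cases x) auto
      then show "x \<in> affine_line p d" unfolding affine_line_def pd fst_conv snd_conv by blast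
    qed
    then show ?thesis by auto
  next
    case False
    have "affine_line p d = sline (d2/d1) (p2 - d2/d1*p1)"
    proof (rule set_eqI, rule iffI)
      fix x assume "x \<in> affine_line p d"
      then show "x \<in> sline (d2/d1) (p2 - d2/d1*p1)" using False pd unfolding affine_line_def sline_def
        by (auto simp: field_simps)
    next
      fix x assume "x \<in> sline (d2/d1) (p2 - d2/d1*p1)"
      then have "x = (p1 + ((fst x - p1)/d1) * d1, p2 + ((fst x - p1)/d1) * d2)"
        using False unfolding sline_def by (cases x) (auto simp: field_simps)
      then show "x \<in> affine_line p d" unfolding affine_line_def pd fst_conv snd_conv by blast
    qed
    then show ?thesis by auto
  qed
qed

lemma affine_lines_eq:
  "(affine_lines :: ('a::field \<times> 'a) set set) = range vline \<union> range (\<lambda>(m,b). sline m b)"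
proof
  show "affine_lines \<subseteq> range vline \<union> range (\<lambda>(m,b). sline m b)"
    unfolding affine_lines_def using aff_cases by blast
next
  show "range vline \<union> range (\<lambda>(m,b). sline m b) \<subseteq> (affine_lines :: ('a \<times> 'a) set set)"
    unfolding affine_lines_def using vline_aff sline_aff by fastforce
qed

lemma vline_inj: "vline a = vline a' \<longleftrightarrow> a = a'"
  unfolding vline_def by (metis (mono_tags) fst_conv mem_Collect_eq)

lemma vline_ne_sline: "vline a \<noteq> sline m b"
proof
  assume "vline a = sline m b"
  moreover have "(a, m*a+b+1) \<in> vline a" unfolding vline_def by auto
  ultimately have "(a, m*a+b+1) \<in> sline m b" by simp
  then show False unfolding sline_def by simp
qed

lemma sline_inj: "sline m b = sline m' b' \<longleftrightarrow> m = m' \<and> b = b'"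
proof
  assume h: "sline m b = sline m' b'"
  have "(0, b) \<in> sline m' b'" using h unfolding sline_def by (metis (mono_tags) fst_conv mem_Collect_eq mult_zero_right add_0 snd_conv)
  then have b: "b = b'" unfolding sline_def by simp
  have "(1, m + b) \<in> sline m b" unfolding sline_def by auto
  then have "(1, m + b) \<in> sline m' b'" using h by simp
  then have "m + b = m' + b'" unfolding sline_def by simp
  then show "m = m' \<and> b = b'" using b by simp
qed simp

lemma mem_sline: "(x,y) \<in> sline m b \<longleftrightarrow> b = y - m*x"
  unfolding sline_def by auto

lemma card_vline: "card (vline (a::'a::{finite,field})) = CARD('a)"
proof -
  have "vline a = (\<lambda>y. (a,y)) ` UNIV" unfolding vline_def by auto
  then show ?thesis by (simp add: card_image inj_on_def)
qed

lemma card_sline: "card (sline m (b::'a::{finite,field})) = CARD('a)"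
proof -
  have "sline m b = (\<lambda>x. (x, m*x+b)) ` UNIV" unfolding sline_def by auto
  then show ?thesis by (simp add: card_image inj_on_def)
qed

lemma lin_lines:
  assumes "L1 \<in> range vline \<union> range (\<lambda>(m,b). sline m b)"
    "L2 \<in> range vline \<union> range (\<lambda>(m,b). sline m (b::'a::{finite,field}))" "L1 \<noteq> L2"
  shows "card (L1 \<inter> L2) \<le> 1"
proof -
  have "\<forall>p\<in>L1 \<inter> L2. \<forall>q\<in>L1 \<inter> L2. p = q"
  proof (intro ballI)
    fix p q assume pq: "p \<in> L1 \<inter> L2" "q \<in> L1 \<inter> L2"
    show "p = q"
      using assms(1,2)
    proof (elim UnE rangeE)
      fix a a' assume "L1 = vline a" "L2 = vline a'"
      then show ?thesis using pq assms(3) unfolding vline_def by auto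
    next
      fix a mb assume "L1 = vline a" "L2 = (\<lambda>(m,b). sline m b) mb"
      then show ?thesis using pq unfolding vline_def sline_def
        by (cases mb, cases p, cases q) auto
    next
      fix a mb assume "L2 = vline a" "L1 = (\<lambda>(m,b). sline m b) mb"
      then show ?thesis using pq unfolding vline_def sline_def
        by (cases mb, cases p, cases q) auto
    next
      fix mb mb' assume h: "L1 = (\<lambda>(m,b). sline m b) mb" "L2 = (\<lambda>(m,b). sline m b) mb'"
      obtain m b m' b' where mb: "mb = (m,b)" "mb' = (m',b')" by fastforce
      obtain p1 p2 q1 q2 where pq2: "p = (p1,p2)" "q = (q1,q2)" by fastforce
      have e: "p2 = m*p1+b" "p2 = m'*p1+b'" "q2 = m*q1+b" "q2 = m'*q1+b'"
        using pq h mb pq2 unfolding sline_def by auto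
      show ?thesis
      proof (cases "m = m'")
        case True
        then have "b = b'" using e by simp
        then show ?thesis using True h mb assms(3) by simp
      next
        case False
        then have "m - m' \<noteq> 0" by simp
        have "(m - m') * p1 = b' - b" "(m - m') * q1 = b' - b" using e by (auto simp: algebra_simps)
        then have "p1 = q1" using \<open>m - m' \<noteq> 0\<close> by (metis mult_left_cancel)
        then show ?thesis using e pq2 by simp
      qed
    qed
  qed
  then show ?thesis by (simp add: card_le_Suc0_iff_eq)
qed


lemma chrom_le: "proper_edge_colouring H n c \<Longrightarrow> chromatic_index H \<le> n"
  unfolding chromatic_index_def by (rule Least_le) blast

lemma chrom_ge: "proper_edge_colouring H n0 c0 \<Longrightarrow> (\<And>n c. proper_edge_colouring H n c \<Longrightarrow> m \<le> n)
   \<Longrightarrow> m \<le> chromatic_index H"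
  unfolding chromatic_index_def by (rule LeastI2_ex) blast+

lemma star_bound:
  assumes "proper_edge_colouring H n c" "S \<subseteq> snd H" "\<forall>e\<in>S. x \<in> e" "finite S"
  shows "card S \<le> n"
proof -
  have "inj_on c S"
    using assms(1-3) unfolding proper_edge_colouring_def inj_on_def by blast
  then have "card S = card (c ` S)" by (simp add: card_image)
  also have "\<dots> \<le> card {..<n}"
    using assms(1,2) unfolding proper_edge_colouring_def by (intro card_mono) auto
  finally show ?thesis by simp
qed

lemma proper_mono: "proper_edge_colouring (V,E) n c \<Longrightarrow> E' \<subseteq> E \<Longrightarrow> proper_edge_colouring (V',E') n c"
  unfolding proper_edge_colouring_def by (simp add: subset_iff)

definition slope :: "('a::field \<times> 'a) set \<Rightarrow> 'a" where
  "slope L = (SOME m. \<exists>b. L = sline m b)"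

lemma slope_sline: "slope (sline m b) = m"
  unfolding slope_def by (rule some_equality) (auto simp: sline_inj)

lemma card_ge2: "2 \<le> CARD('a::{finite,field})"
proof -
  have "card {0::'a, 1} = 2" by simp
  moreover have "card {0::'a, 1} \<le> CARD('a)" by (rule card_mono) auto
  ultimately show ?thesis by simp
qed

lemma star_card: "card (insert (vline 0) ((\<lambda>m. sline m y) ` (UNIV::'a set))) = CARD('a::{finite,field}) + 1"
proof -
  have "vline 0 \<notin> (\<lambda>m. sline m y) ` (UNIV::'a set)" using vline_ne_sline by blast
  moreover have "finite ((\<lambda>m. sline m y) ` (UNIV::'a set))" by simp
  moreover have "inj (\<lambda>m. sline m (y::'a))" by (simp add: inj_on_def sline_inj)
  ultimately show ?thesis by (simp add: card_image)
qed

lemma star0_card: "card ((\<lambda>m. sline m (y::'a::{finite,field})) ` UNIV) = CARD('a)"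
  by (simp add: card_image inj_on_def sline_inj)


lemma card_UNIV_sq: "card (UNIV :: ('a::finite \<times> 'a) set) = CARD('a) ^ 2"
  by (simp add: power2_eq_square card_cartesian_product flip: UNIV_Times_UNIV)

theorem proposition4p2:
  fixes k :: nat
  assumes "k = CARD('a)"
  shows "\<exists>(V :: ('a::{finite,field} \<times> 'a) set) (E :: ('a \<times> 'a) set set) D.
     V = fst (field_plane :: ('a \<times> 'a) set \<times> _) \<and>
     D \<subseteq> snd (field_plane :: ('a \<times> 'a) set \<times> _) \<and> card D = k - 1 \<and>
     (\<forall>L1\<in>D. \<forall>L2\<in>D. parallel_lines L1 L2) \<and>
     E = snd (field_plane :: ('a \<times> 'a) set \<times> _) - D \<and>
     hyperedge_set (V, E) \<and> linear_hg (V, E) \<and> uniform_hg k (V, E) \<and>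
     card V = k ^ 2 \<and> card E = k ^ 2 + 1 \<and>
     chromatic_index (V, E) = k + 1 \<and>
     (\<exists>e. e \<subseteq> V \<and> e \<notin> E \<and> linear_hg (V, insert e E) \<and> uniform_hg k (V, insert e E)) \<and>
     (\<exists>e0\<in>E.
        (\<forall>x\<in>e0. deg (V, E) x = k + 1) \<and> (\<forall>x\<in>V - e0. deg (V, E) x \<ge> k) \<and>
        (\<forall>e\<in>E. (\<forall>x\<in>e. deg (V, E) x = k + 1) \<and> (\<forall>x\<in>V - e. deg (V, E) x \<ge> k) \<longrightarrow> e = e0) \<and>
        {e \<in> E. critical_edge (V, E) e} = {e0})"
proof -
  let ?V = "UNIV :: ('a \<times> 'a) set"
  define SL where "SL = range (\<lambda>(m,b). sline m (b::'a))"
  define e0 where "e0 = (vline 0 :: ('a \<times> 'a) set)"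
  define D where "D = vline ` (UNIV - {0::'a})"
  define E where "E = insert e0 SL"
  have k2: "k \<ge> 2" using card_ge2 assms by simp
  have AL: "snd (field_plane :: ('a \<times> 'a) set \<times> _) = range vline \<union> SL"
    unfolding field_plane_def SL_def using affine_lines_eq by simp
  have V: "fst (field_plane :: ('a \<times> 'a) set \<times> _) = ?V" by (simp add: field_plane_def)
  have vSL: "vline a \<notin> SL" for a unfolding SL_def using vline_ne_sline by auto
  have E_eq: "E = snd (field_plane :: ('a \<times> 'a) set \<times> _) - D"
    unfolding AL E_def D_def e0_def using vSL vline_inj by auto
  have D_sub: "D \<subseteq> snd (field_plane :: ('a \<times> 'a) set \<times> _)" unfolding AL D_def by auto
  have cardD: "card D = k - 1" unfolding D_def
    by (simp add: card_image inj_on_def vline_inj card_Diff_singleton assms)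
  have parD: "\<forall>L1\<in>D. \<forall>L2\<in>D. parallel_lines L1 L2"
  proof (intro ballI)
    fix L1 L2 assume "L1 \<in> D" "L2 \<in> D"
    then obtain a b where "L1 = vline a" "L2 = vline b" unfolding D_def by auto
    then show "parallel_lines L1 L2" unfolding parallel_lines_def
      by (intro exI[of _ "(a,0)"] exI[of _ "(b,0)"] exI[of _ "(0,1)"]) (simp add: vline_aff)
  qed
  have lines_lin: "linear_hg (?V, F)" if "F \<subseteq> range vline \<union> SL" for F
    unfolding linear_hg_def snd_conv
  proof (intro ballI impI)
    fix e1 e2 assume "e1 \<in> F" "e2 \<in> F" "e1 \<noteq> e2"
    then show "card (e1 \<inter> e2) \<le> 1" using lin_lines[of e1 e2] that unfolding SL_def by blast
  qed
  have lines_uni: "uniform_hg k (?V, F)" if "F \<subseteq> range vline \<union> SL" for F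
    unfolding uniform_hg_def using that unfolding SL_def
    by (auto simp: card_vline card_sline assms)
  have E_lines: "E \<subseteq> range vline \<union> SL" unfolding E_def e0_def by auto
  have cardV: "card ?V = k ^ 2" using card_UNIV_sq assms by simp
  have cardSL: "card SL = k * k"
  proof -
    have "inj (\<lambda>(m,b). sline m (b::'a))" by (auto simp: inj_on_def sline_inj)
    then have "card SL = card ?V" unfolding SL_def by (simp add: card_image)
    then show ?thesis using cardV by (simp add: power2_eq_square)
  qed
  have cardE: "card E = k ^ 2 + 1"
    unfolding E_def e0_def using vSL cardSL by (simp add: power2_eq_square)
  obtain f where f: "bij_betw f (UNIV::'a set) {0..<k}"
    using ex_bij_betw_finite_nat[of "UNIV::'a set"] assms by auto
  have finj: "f m = f m' \<Longrightarrow> m = m'" for m m' using f unfolding bij_betw_def inj_on_def by auto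
  have flt: "f m < k" for m using f unfolding bij_betw_def by auto
  define c where "c L = (if L = e0 then k else f (slope L))" for L
  have sl_disj: "sline m b \<inter> sline m b' = {}" if "b \<noteq> b'" for m b b' :: 'a
    using that unfolding sline_def by auto
  have cSL: "c (sline m b) = f m" for m b unfolding c_def e0_def
    using not_sym[OF vline_ne_sline[of 0 m b]] by (simp add: slope_sline)
  have ce0: "c e0 = k" by (simp add: c_def)
  have e0SL: "e0 \<notin> SL" unfolding e0_def by (rule vSL)
  have properE: "proper_edge_colouring (?V, E) (k+1) c"
    unfolding proper_edge_colouring_def
  proof (intro conjI ballI impI)
    fix e assume "e \<in> snd (?V, E)"
    then show "c e < k + 1" unfolding E_def SL_def using cSL flt ce0 by (force intro: less_SucI)
  next
    fix e1 e2 assume h: "e1 \<in> snd (?V, E)" "e2 \<in> snd (?V, E)" "e1 \<noteq> e2 \<and> e1 \<inter> e2 \<noteq> {}"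
    show "c e1 \<noteq> c e2"
    proof (cases "e1 = e0 \<or> e2 = e0")
      case True
      have "e1 \<in> SL \<or> e2 \<in> SL" using h True unfolding E_def by auto
      then have "c e1 < k \<or> c e2 < k" unfolding SL_def using cSL flt by auto
      then show ?thesis using True ce0 h by auto
    next
      case False
      then obtain m b m' b' where "e1 = sline m b" "e2 = sline m' b'"
        using h unfolding E_def SL_def by auto
      then show ?thesis using h cSL finj sl_disj by metis
    qed
  qed
  have properSL: "proper_edge_colouring (?V, SL) k c"
    unfolding proper_edge_colouring_def
  proof (intro conjI ballI impI)
    fix e assume "e \<in> snd (?V, SL)"
    then show "c e < k" unfolding SL_def using cSL flt by auto
  next
    fix e1 e2 assume h: "e1 \<in> snd (?V, SL)" "e2 \<in> snd (?V, SL)" "e1 \<noteq> e2 \<and> e1 \<inter> e2 \<noteq> {}"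
    then obtain m b m' b' where "e1 = sline m b" "e2 = sline m' b'"
      unfolding SL_def by auto
    then show "c e1 \<noteq> c e2" using h cSL finj sl_disj by metis
  qed
  have star_sub: "insert (vline 0) ((\<lambda>m. sline m y) ` (UNIV::'a set)) \<subseteq> E" for y
    unfolding E_def e0_def SL_def by auto
  have star_in: "\<forall>e\<in>insert (vline 0) ((\<lambda>m. sline m y) ` (UNIV::'a set)). (0,y) \<in> e" for y
    unfolding vline_def sline_def by auto
  have chromE: "chromatic_index (?V, E) = k + 1"
  proof (rule antisym)
    show "chromatic_index (?V, E) \<le> k + 1" using properE by (rule chrom_le)
    show "k + 1 \<le> chromatic_index (?V, E)"
      using properE
    proof (rule chrom_ge)
      fix n c' assume "proper_edge_colouring (?V, E) n c'"
      from star_bound[OF this _ star_in[of 0]] star_sub[of 0] star_card[of "0::'a"] assms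
      show "k + 1 \<le> n" by simp
    qed
  qed
  have SL_eq: "E - {e0} = SL" unfolding E_def e0_def using vSL by auto
  have chromSL: "chromatic_index (?V, E - {e0}) = k"
    unfolding SL_eq
  proof (rule antisym)
    show "chromatic_index (?V, SL) \<le> k" using properSL by (rule chrom_le)
    show "k \<le> chromatic_index (?V, SL)"
      using properSL
    proof (rule chrom_ge)
      fix n c' assume "proper_edge_colouring (?V, SL) n c'"
      moreover have "(\<lambda>m. sline m 0) ` (UNIV::'a set) \<subseteq> snd (?V, SL)" unfolding SL_def by auto
      moreover have "\<forall>e\<in>(\<lambda>m. sline m 0) ` (UNIV::'a set). (0,0) \<in> e" unfolding sline_def by auto
      ultimately have "card ((\<lambda>m. sline m 0) ` (UNIV::'a set)) \<le> n" by (intro star_bound) auto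
      then show "k \<le> n" using star0_card[of "0::'a"] assms by simp
    qed
  qed
  have chromO: "k + 1 \<le> chromatic_index (?V, E - {e})" if eSL: "e \<in> SL" for e
  proof -
    obtain m0 b0 where e: "e = sline m0 b0" using eSL unfolding SL_def by auto
    have pr: "proper_edge_colouring (?V, E - {e}) (k+1) c"
      using properE by (rule proper_mono) auto
    show ?thesis using pr
    proof (rule chrom_ge)
      fix n c' assume h: "proper_edge_colouring (?V, E - {e}) n c'"
      have "insert (vline 0) ((\<lambda>m. sline m (b0+1)) ` (UNIV::'a set)) \<subseteq> snd (?V, E - {e})"
        using star_sub[of "b0+1"] vline_ne_sline e by (auto simp: sline_inj)
      from star_bound[OF h this star_in[of "b0+1"]] star_card[of "b0+1"] assms
      show "k + 1 \<le> n" by simp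
    qed
  qed
  have degE: "{e \<in> E. (a,y) \<in> e} = (if a = 0 then {e0} else {}) \<union> (\<lambda>m. sline m (y - m*a)) ` UNIV" for a y
    unfolding E_def SL_def e0_def by (auto simp: mem_sline vline_def)
  have deg_eq: "deg (?V, E) x = k + (if fst x = 0 then 1 else 0)" for x
  proof -
    obtain a y where x: "x = (a,y)" by fastforce
    have "e0 \<notin> (\<lambda>m. sline m (y - m*a)) ` UNIV" unfolding e0_def using vline_ne_sline by auto
    moreover have "card ((\<lambda>m. sline m (y - m*a)) ` UNIV) = k"
      using assms by (simp add: card_image inj_on_def sline_inj)
    ultimately show ?thesis unfolding deg_def snd_conv x degE by auto
  qed
  have e0_in: "x \<in> e0 \<longleftrightarrow> fst x = 0" for x unfolding e0_def vline_def by simp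
  show ?thesis
  proof (rule exI[of _ ?V], rule exI[of _ E], rule exI[of _ D], intro conjI)
    show "?V = fst (field_plane :: ('a \<times> 'a) set \<times> _)" using V by simp
    show "D \<subseteq> snd (field_plane :: ('a \<times> 'a) set \<times> _)" by (rule D_sub)
    show "card D = k - 1" by (rule cardD)
    show "\<forall>L1\<in>D. \<forall>L2\<in>D. parallel_lines L1 L2" by (rule parD)
    show "E = snd (field_plane :: ('a \<times> 'a) set \<times> _) - D" by (rule E_eq)
    show "hyperedge_set (?V, E)" unfolding hyperedge_set_def by simp
    show "linear_hg (?V, E)" using E_lines by (rule lines_lin)
    show "uniform_hg k (?V, E)" using E_lines by (rule lines_uni)
    show "card ?V = k ^ 2" by (rule cardV)
    show "card E = k ^ 2 + 1" by (rule cardE)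
    show "chromatic_index (?V, E) = k + 1" by (rule chromE)
    show "\<exists>e. e \<subseteq> ?V \<and> e \<notin> E \<and> linear_hg (?V, insert e E) \<and> uniform_hg k (?V, insert e E)"
    proof (intro exI conjI)
      show "vline 1 \<subseteq> ?V" by simp
      show "vline 1 \<notin> E" unfolding E_def e0_def using vSL by (auto simp: vline_inj)
      show "linear_hg (?V, insert (vline 1) E)" using E_lines by (intro lines_lin) auto
      show "uniform_hg k (?V, insert (vline 1) E)" using E_lines by (intro lines_uni) auto
    qed
    show "\<exists>e0\<in>E.
        (\<forall>x\<in>e0. deg (?V, E) x = k + 1) \<and> (\<forall>x\<in>?V - e0. deg (?V, E) x \<ge> k) \<and>
        (\<forall>e\<in>E. (\<forall>x\<in>e. deg (?V, E) x = k + 1) \<and> (\<forall>x\<in>?V - e. deg (?V, E) x \<ge> k) \<longrightarrow> e = e0) \<and>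
        {e \<in> E. critical_edge (?V, E) e} = {e0}"
    proof (intro bexI[of _ e0] conjI ballI impI)
      show "e0 \<in> E" unfolding E_def by simp
      show "deg (?V, E) x = k + 1" if "x \<in> e0" for x using that e0_in deg_eq by simp
      show "deg (?V, E) x \<ge> k" if "x \<in> ?V - e0" for x using deg_eq by simp
      show "e = e0" if "e \<in> E" "(\<forall>x\<in>e. deg (?V, E) x = k + 1) \<and> (\<forall>x\<in>?V - e. deg (?V, E) x \<ge> k)" for e
      proof -
        have sub: "e \<subseteq> e0" using that(2) deg_eq e0_in by (auto split: if_splits)
        have "card e = k" using lines_uni[OF E_lines] that(1) unfolding uniform_hg_def by auto
        moreover have "card e0 = k" unfolding e0_def using card_vline assms by simp
        ultimately show ?thesis using card_subset_eq[OF _ sub] by simp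
      qed
      show "{e \<in> E. critical_edge (?V, E) e} = {e0}"
      proof (rule set_eqI, rule iffI)
        fix e assume h: "e \<in> {e \<in> E. critical_edge (?V, E) e}"
        show "e \<in> {e0}"
        proof (rule ccontr)
          assume "e \<notin> {e0}"
          then have "e \<in> SL" using h unfolding E_def by auto
          from chromO[OF this] h chromE show False unfolding critical_edge_def by simp
        qed
      next
        fix e assume "e \<in> {e0}"
        then show "e \<in> {e \<in> E. critical_edge (?V, E) e}"
          unfolding critical_edge_def using chromSL chromE by (simp add: E_def)
      qed
    qed
  qed
qed

end
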